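(* Let $p,q\ge2$ be coprime, $f=x^p+y^q$, $G=\mathbb{Z}/pq\mathbb{Z}=\langle\Lambda\rangle$ with $\rho(\Lambda)=\mathrm{diag}(e^{2\pi i/p},e^{2\pi i/q})$, $j=\Lambda$, and $\sigma\equiv0$. Then the $\check\varphi$-invariant subspace of $\check{GM_f}$ has dimension $(p-1)(q-1)$ and is spanned by the elements $\check1_{\Lambda^i}$, $i\in\{0,\dots,pq-1\}$, with $i-1\not\equiv0\pmod p$ and $i-1\not\equiv0\pmod q$. For such $i$ write $i\equiv u\pmod p$ with $u\in\{2,\dots,p\}$ and $i\equiv v\pmod q$ with $v\in\{2,\dots,q\}$; then the map $\check1_{\Lambda^i}\mapsto x^{p-u}y^{q-v}$ is a bijection onto the monomial basis $\{x^ay^b:0\le a\le p-2,\ 0\le b\le q-2\}$ of $M_f$, and the dual bi-degree of $\check 1_{\Lambda^i}$ is $(-\deg(x^{p-u}y^{q-v}),\ \deg(x^{p-u}y^{q-v}))$ with $\deg x=\frac1p$, $\deg y=\frac1q$. In particular the invariants of the dual are isomorphic as a bi-graded vector space to the $(a,c)$ realization of $M_f$ (for $(p,q)=(3,4)$ this is $E_6$, for $(3,5)$ it is $E_8$).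
   Context: Standing setup. For quasi-homogeneous $f$ with weights $q_i\in(0,1)$, $d=\sum_i(1-2q_i)$, a finite abelian group $G$ acting diagonally via $\rho$ leaving $f$ invariant, $\rho(g)=\mathrm{diag}(e^{2\pi i\nu_i(g)})$, $\nu_i(g)\in[0,1)$: $\mathrm{Fix}(g)$ is spanned by the coordinates with $\nu_i(g)=0$, $A_g=M_{f|_{\mathrm{Fix}(g)}}$ ($=\mathbb{C}$ if $\mathrm{Fix}(g)=0$) with elements $a1_g$; for $\sigma\in\mathrm{Hom}(G,\mathbb{Z}/2\mathbb{Z})$, $\varphi(h)(a1_g)=(-1)^{\sigma(h)\sigma(g)}\det(\rho(h))^{-1}\det(\rho(h)|_{\mathrm{Fix}(g)})\,a(\rho(h)z)\,1_g$, $\chi(h)=(-1)^{\sigma(h)}\det\rho(h)$. Let $j\in G$ satisfy $\rho(j)=\mathrm{diag}(e^{2\pi iq_i})$. Dual: $\check A_g:=A_{gj^{-1}}$; $a\check1_g$ denotes $a1_{gj^{-1}}$ viewed in $\check A_g$; $\check\varphi(h)(a\check1_g)=\chi(h)\varphi(h)(a1_{gj^{-1}})$ viewed in $\check A_g$. Shifts $s_g=\sum_{i:\nu_i(g)\ne0}(\nu_i(g)-q_i)$, $\bar s_g=\sum_{i:\nu_i(g)\ne0}(1-\nu_i(g)-q_i)$; the dual bi-degree of $a\check1_g$ is $(\deg a+s_{gj^{-1}}-d,\ \deg a+\bar s_{gj^{-1}})$. *)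

theory Defs
  imports "HOL-Analysis.Analysis" "HOL-Library.Poly_Mapping"
begin

type_synonym mono = "nat \<Rightarrow>\<^sub>0 nat"
type_synonym mpoly = "mono \<Rightarrow>\<^sub>0 complex"

definition const :: "complex \<Rightarrow> mpoly" where
  "const c = Poly_Mapping.single 0 c"

definition var :: "nat \<Rightarrow> mpoly" where
  "var i = Poly_Mapping.single (Poly_Mapping.single i 1) 1"

definition polys_in :: "nat set \<Rightarrow> mpoly set" where
  "polys_in S = {a. \<forall>\<alpha>\<in>Poly_Mapping.keys a. Poly_Mapping.keys \<alpha> \<subseteq> S}"

text \<open>Restriction of a polynomial to the coordinate subspace spanned by S
  (the other variables are set to 0).\<close>
definition restr :: "nat set \<Rightarrow> mpoly \<Rightarrow> mpoly" where
  "restr S F = (\<Sum>\<alpha>\<in>{\<alpha>\<in>Poly_Mapping.keys F. Poly_Mapping.keys \<alpha> \<subseteq> S}. Poly_Mapping.single \<alpha> (Poly_Mapping.lookup F \<alpha>))"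

definition pd :: "nat \<Rightarrow> mpoly \<Rightarrow> mpoly" where
  "pd i F = (\<Sum>\<alpha>\<in>Poly_Mapping.keys F.
      Poly_Mapping.single (\<alpha> - Poly_Mapping.single i 1) (of_nat (Poly_Mapping.lookup \<alpha> i) * Poly_Mapping.lookup F \<alpha>))"

definition jac :: "nat set \<Rightarrow> mpoly \<Rightarrow> mpoly set" where
  "jac S F = {(\<Sum>i\<in>S. g i * pd i F) | g. \<forall>i\<in>S. g i \<in> polys_in S}"

text \<open>Equality in the Milnor ring of F restricted to the variables S:
  M_{F|S} = C[z_i : i in S] / (d_i (F|S) : i in S).  (For S empty this is C.)\<close>
definition milnor_eq :: "nat set \<Rightarrow> mpoly \<Rightarrow> mpoly \<Rightarrow> mpoly \<Rightarrow> bool" where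
  "milnor_eq S F a b \<longleftrightarrow> a - b \<in> jac S (restr S F)"

definition diag_subst :: "(nat \<Rightarrow> complex) \<Rightarrow> mpoly \<Rightarrow> mpoly" where
  "diag_subst c a = (\<Sum>\<alpha>\<in>Poly_Mapping.keys a.
      Poly_Mapping.single \<alpha> ((\<Prod>i\<in>Poly_Mapping.keys \<alpha>. c i ^ Poly_Mapping.lookup \<alpha> i) * Poly_Mapping.lookup a \<alpha>))"

definition wdeg :: "(nat \<Rightarrow> real) \<Rightarrow> mono \<Rightarrow> real" where
  "wdeg qw \<alpha> = (\<Sum>i\<in>Poly_Mapping.keys \<alpha>. real (Poly_Mapping.lookup \<alpha> i) * qw i)"

text \<open>n variables; group elements of type 'g; nu g i in [0,1) with
  rho(g) = diag(exp(2 pi i nu_i(g))); sg g in {0,1} represents a homomorphism to Z/2.\<close>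

definition lam :: "('g \<Rightarrow> nat \<Rightarrow> real) \<Rightarrow> 'g \<Rightarrow> nat \<Rightarrow> complex" where
  "lam nu h i = cis (2 * pi * nu h i)"

definition fixset :: "nat \<Rightarrow> ('g \<Rightarrow> nat \<Rightarrow> real) \<Rightarrow> 'g \<Rightarrow> nat set" where
  "fixset n nu g = {i. i < n \<and> nu g i = 0}"

definition detr :: "nat \<Rightarrow> ('g \<Rightarrow> nat \<Rightarrow> real) \<Rightarrow> 'g \<Rightarrow> complex" where
  "detr n nu h = (\<Prod>i<n. lam nu h i)"

definition detr_fix :: "nat \<Rightarrow> ('g \<Rightarrow> nat \<Rightarrow> real) \<Rightarrow> 'g \<Rightarrow> 'g \<Rightarrow> complex" where
  "detr_fix n nu h g = (\<Prod>i\<in>fixset n nu g. lam nu h i)"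

text \<open>phi(h)(a 1_g), returned as the polynomial coefficient of 1_g.\<close>
definition phi :: "nat \<Rightarrow> ('g \<Rightarrow> nat \<Rightarrow> real) \<Rightarrow> ('g \<Rightarrow> nat) \<Rightarrow> 'g \<Rightarrow> 'g \<Rightarrow> mpoly \<Rightarrow> mpoly" where
  "phi n nu sg h g a =
     const ((-1) ^ (sg h * sg g) * inverse (detr n nu h) * detr_fix n nu h g)
       * diag_subst (lam nu h) a"

definition chi :: "nat \<Rightarrow> ('g \<Rightarrow> nat \<Rightarrow> real) \<Rightarrow> ('g \<Rightarrow> nat) \<Rightarrow> 'g \<Rightarrow> complex" where
  "chi n nu sg h = (-1) ^ sg h * detr n nu h"

text \<open>G is the set of group elements, jinv g = g j^{-1}.  An element of the dual
  space is a family w with w g in A_{g j^{-1}} (a polynomial in the variables of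
  Fix(g j^{-1}), read modulo the Jacobian ideal); w g is the coefficient of the
  dual unit of g.\<close>

definition dual_space :: "nat \<Rightarrow> ('g \<Rightarrow> nat \<Rightarrow> real) \<Rightarrow> ('g \<Rightarrow> 'g) \<Rightarrow> 'g set \<Rightarrow> ('g \<Rightarrow> mpoly) set" where
  "dual_space n nu jinv G =
     {w. (\<forall>g\<in>G. w g \<in> polys_in (fixset n nu (jinv g))) \<and> (\<forall>g. g \<notin> G \<longrightarrow> w g = 0)}"

definition dual_equiv :: "nat \<Rightarrow> ('g \<Rightarrow> nat \<Rightarrow> real) \<Rightarrow> ('g \<Rightarrow> 'g) \<Rightarrow> 'g set \<Rightarrow> mpoly
     \<Rightarrow> ('g \<Rightarrow> mpoly) \<Rightarrow> ('g \<Rightarrow> mpoly) \<Rightarrow> bool" where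
  "dual_equiv n nu jinv G F w w' \<longleftrightarrow>
     (\<forall>g\<in>G. milnor_eq (fixset n nu (jinv g)) F (w g) (w' g))"

text \<open>The dual action: phi-check(h)(a 1-check_g) = chi(h) phi(h)(a 1_{g j^{-1}}).\<close>
definition dual_act :: "nat \<Rightarrow> ('g \<Rightarrow> nat \<Rightarrow> real) \<Rightarrow> ('g \<Rightarrow> nat) \<Rightarrow> ('g \<Rightarrow> 'g) \<Rightarrow> 'g set
     \<Rightarrow> 'g \<Rightarrow> ('g \<Rightarrow> mpoly) \<Rightarrow> ('g \<Rightarrow> mpoly)" where
  "dual_act n nu sg jinv G h w =
     (\<lambda>g. if g \<in> G then const (chi n nu sg h) * phi n nu sg h (jinv g) (w g) else 0)"

definition dual_invariant :: "nat \<Rightarrow> ('g \<Rightarrow> nat \<Rightarrow> real) \<Rightarrow> ('g \<Rightarrow> nat) \<Rightarrow> ('g \<Rightarrow> 'g) \<Rightarrow> 'g set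
     \<Rightarrow> mpoly \<Rightarrow> ('g \<Rightarrow> mpoly) \<Rightarrow> bool" where
  "dual_invariant n nu sg jinv G F w \<longleftrightarrow>
     w \<in> dual_space n nu jinv G \<and>
     (\<forall>h\<in>G. dual_equiv n nu jinv G F (dual_act n nu sg jinv G h w) w)"

text \<open>The element 1-check_{g0} (i.e. 1_{g0 j^{-1}} viewed in the dual).\<close>
definition dual_unit :: "'g \<Rightarrow> ('g \<Rightarrow> mpoly)" where
  "dual_unit g0 = (\<lambda>g. if g = g0 then 1 else 0)"

definition shift :: "nat \<Rightarrow> (nat \<Rightarrow> real) \<Rightarrow> ('g \<Rightarrow> nat \<Rightarrow> real) \<Rightarrow> 'g \<Rightarrow> real" where
  "shift n qw nu g = (\<Sum>i\<in>{i. i < n \<and> nu g i \<noteq> 0}. nu g i - qw i)"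

definition shiftbar :: "nat \<Rightarrow> (nat \<Rightarrow> real) \<Rightarrow> ('g \<Rightarrow> nat \<Rightarrow> real) \<Rightarrow> 'g \<Rightarrow> real" where
  "shiftbar n qw nu g = (\<Sum>i\<in>{i. i < n \<and> nu g i \<noteq> 0}. 1 - nu g i - qw i)"

definition cdim :: "nat \<Rightarrow> (nat \<Rightarrow> real) \<Rightarrow> real" where
  "cdim n qw = (\<Sum>i<n. 1 - 2 * qw i)"

definition dual_bideg :: "nat \<Rightarrow> (nat \<Rightarrow> real) \<Rightarrow> ('g \<Rightarrow> nat \<Rightarrow> real) \<Rightarrow> ('g \<Rightarrow> 'g)
     \<Rightarrow> mono \<Rightarrow> 'g \<Rightarrow> real \<times> real" where
  "dual_bideg n qw nu jinv \<alpha> g =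
     (wdeg qw \<alpha> + shift n qw nu (jinv g) - cdim n qw, wdeg qw \<alpha> + shiftbar n qw nu (jinv g))"

text \<open>x = variable 0, y = variable 1.  Group element Lambda^k is represented by
  k in {0..<p*q}; rho(Lambda^k) = diag(exp(2 pi i k/p), exp(2 pi i k/q)).\<close>

definition fpq :: "nat \<Rightarrow> nat \<Rightarrow> mpoly" where
  "fpq p q = var 0 ^ p + var 1 ^ q"

definition qwpq :: "nat \<Rightarrow> nat \<Rightarrow> nat \<Rightarrow> real" where
  "qwpq p q i = (if i = 0 then 1 / real p else if i = 1 then 1 / real q else 0)"

definition nupq :: "nat \<Rightarrow> nat \<Rightarrow> nat \<Rightarrow> nat \<Rightarrow> real" where
  "nupq p q k i = (if i = 0 then real (k mod p) / real p
                   else if i = 1 then real (k mod q) / real q else 0)"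

text \<open>j = Lambda, so g j^{-1} for g = Lambda^k is Lambda^(k-1 mod pq).\<close>
definition jinvpq :: "nat \<Rightarrow> nat \<Rightarrow> nat \<Rightarrow> nat" where
  "jinvpq p q k = (k + p * q - 1) mod (p * q)"

definition monexp :: "nat \<Rightarrow> nat \<Rightarrow> mono" where
  "monexp a b = Poly_Mapping.single 0 a + Poly_Mapping.single 1 b"

definition mon :: "nat \<Rightarrow> nat \<Rightarrow> mpoly" where
  "mon a b = Poly_Mapping.single (monexp a b) 1"

definition rep2 :: "nat \<Rightarrow> nat \<Rightarrow> nat" where
  "rep2 m i = (THE u. u \<in> {2..m} \<and> i mod m = u mod m)"

end

theory Submission
  imports Defs "HOL-Number_Theory.Cong"
begin

lemma lookup_sum_single:
  assumes "finite K"
  shows "Poly_Mapping.lookup (\<Sum>\<beta>\<in>K. Poly_Mapping.single \<beta> (f \<beta>)) \<alpha> = (if \<alpha> \<in> K then f \<alpha> else (0::'b::comm_monoid_add))"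
  using assms by (simp add: lookup_sum lookup_single when_def sum.delta eq_commute)

lemma keys_sum_single:
  assumes "finite K"
  shows "Poly_Mapping.keys (\<Sum>\<beta>\<in>K. Poly_Mapping.single \<beta> (f \<beta>)) = {\<beta>\<in>K. f \<beta> \<noteq> (0::'b::comm_monoid_add)}"
  using assms by (auto simp: in_keys_iff lookup_sum_single split: if_splits)

lemma poly_expand:
  "(a::'a \<Rightarrow>\<^sub>0 'b::comm_monoid_add) = (\<Sum>\<beta>\<in>Poly_Mapping.keys a. Poly_Mapping.single \<beta> (Poly_Mapping.lookup a \<beta>))"
  by (rule poly_mapping_eqI) (simp add: lookup_sum_single in_keys_iff)

lemma lookup_const_mult:
  "Poly_Mapping.lookup (const c * P) \<alpha> = c * Poly_Mapping.lookup P \<alpha>"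
proof -
  have "const c * P = (\<Sum>\<beta>\<in>Poly_Mapping.keys P. Poly_Mapping.single \<beta> (c * Poly_Mapping.lookup P \<beta>))"
    apply (subst poly_expand[of P])
    apply (simp add: sum_distrib_left const_def mult_single)
    done
  then show ?thesis by (simp add: lookup_sum_single in_keys_iff)
qed

lemma lookup_diag_subst:
  "Poly_Mapping.lookup (diag_subst c a) \<alpha> = (\<Prod>i\<in>Poly_Mapping.keys \<alpha>. c i ^ Poly_Mapping.lookup \<alpha> i) * Poly_Mapping.lookup a \<alpha>"
  by (simp add: diag_subst_def lookup_sum_single in_keys_iff)

lemma var_pow: "var i ^ n = Poly_Mapping.single (Poly_Mapping.single i n) 1"
  by (induction n) (simp_all add: var_def mult_single single_add[symmetric] add.commute)

definition Ee :: "nat \<Rightarrow> nat \<Rightarrow> nat \<Rightarrow> nat" where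
  "Ee p q i = (if i = 0 then p else q)"

definition mo :: "nat \<Rightarrow> nat \<Rightarrow> nat \<Rightarrow> mono" where
  "mo p q i = Poly_Mapping.single i (Ee p q i)"

lemma lookup_minus_nat: "Poly_Mapping.lookup ((a::nat\<Rightarrow>\<^sub>0nat) - b) k = Poly_Mapping.lookup a k - Poly_Mapping.lookup b k"
  by (rule lookup_minus)

lemma fpq_sum: "fpq p q = (\<Sum>i\<in>{0,1}. Poly_Mapping.single (mo p q i) 1)"
  by (simp add: fpq_def var_pow mo_def Ee_def)

lemma mo_inj: assumes "1 \<le> p" "1 \<le> q" shows "inj_on (mo p q) {0,1}"
proof -
  have "mo p q 0 \<noteq> mo p q 1"
  proof
    assume "mo p q 0 = mo p q 1"
    then have "Poly_Mapping.lookup (mo p q 0) 0 = Poly_Mapping.lookup (mo p q 1) 0" by simp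
    then show False using assms by (simp add: mo_def Ee_def lookup_single)
  qed
  then show ?thesis by (auto simp: inj_on_def)
qed

lemma keys_mo: assumes "1 \<le> p" "1 \<le> q" shows "Poly_Mapping.keys (mo p q i) = {i}"
  using assms by (simp add: mo_def Ee_def)

lemma restr_fpq:
  assumes "1 \<le> p" "1 \<le> q" "S \<subseteq> {0,1}"
  shows "restr S (fpq p q) = (\<Sum>\<beta>\<in>mo p q ` S. Poly_Mapping.single \<beta> 1)"
proof -
  have F: "fpq p q = (\<Sum>\<beta>\<in>mo p q ` {0,1}. Poly_Mapping.single \<beta> 1)"
    unfolding fpq_sum using mo_inj[OF assms(1,2)] by (simp add: sum.reindex)
  have K: "Poly_Mapping.keys (fpq p q) = mo p q ` {0,1}"
    unfolding F by (subst keys_sum_single) auto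
  have "{\<alpha> \<in> Poly_Mapping.keys (fpq p q). Poly_Mapping.keys \<alpha> \<subseteq> S} = mo p q ` S"
    unfolding K using assms by (auto simp: keys_mo)
  moreover have "Poly_Mapping.lookup (fpq p q) \<beta> = 1" if b: "\<beta> \<in> mo p q ` S" for \<beta>
  proof -
    have "\<beta> \<in> mo p q ` {0,1}" using assms(3) b by blast
    then show ?thesis unfolding F by (subst lookup_sum_single) simp_all
  qed
  ultimately show ?thesis unfolding restr_def by (intro sum.cong) auto
qed

definition mp :: "nat \<Rightarrow> nat \<Rightarrow> nat \<Rightarrow> mono" where
  "mp p q i = Poly_Mapping.single i (Ee p q i - 1)"

lemma pd_restr:
  assumes "1 \<le> p" "1 \<le> q" "S \<subseteq> {0,1}" "j \<in> S"
  shows "pd j (restr S (fpq p q)) = Poly_Mapping.single (mp p q j) (of_nat (Ee p q j))"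
proof -
  have inj: "inj_on (mo p q) S" by (rule inj_on_subset[OF mo_inj[OF assms(1,2)] assms(3)])
  have fin: "finite S" using assms(3) finite_subset by blast
  let ?R = "restr S (fpq p q)"
  have K: "Poly_Mapping.keys ?R = mo p q ` S"
    unfolding restr_fpq[OF assms(1-3)] using fin by (subst keys_sum_single) auto
  have L: "\<And>\<beta>. \<beta> \<in> mo p q ` S \<Longrightarrow> Poly_Mapping.lookup ?R \<beta> = 1"
    unfolding restr_fpq[OF assms(1-3)] using fin by (subst lookup_sum_single) auto
  have "pd j ?R = (\<Sum>\<beta>\<in>mo p q ` S. Poly_Mapping.single (\<beta> - Poly_Mapping.single j 1) (of_nat (Poly_Mapping.lookup \<beta> j)))"
    unfolding pd_def K by (intro sum.cong refl) (simp add: L)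
  also have "\<dots> = (\<Sum>i\<in>S. Poly_Mapping.single (mo p q i - Poly_Mapping.single j 1) (of_nat (Poly_Mapping.lookup (mo p q i) j)))"
    by (subst sum.reindex[OF inj]) (simp add: o_def)
  also have "\<dots> = (\<Sum>i\<in>S. if i = j then Poly_Mapping.single (mp p q j) (of_nat (Ee p q j)) else 0)"
  proof (intro sum.cong refl)
    fix i assume "i \<in> S"
    show "Poly_Mapping.single (mo p q i - Poly_Mapping.single j 1) (of_nat (Poly_Mapping.lookup (mo p q i) j)) =
          (if i = j then Poly_Mapping.single (mp p q j) (of_nat (Ee p q j)) else 0)"
    proof (cases "i = j")
      case True
      have "mo p q j - Poly_Mapping.single j 1 = mp p q j"
        by (rule poly_mapping_eqI) (simp add: lookup_minus_nat mo_def mp_def lookup_single when_def)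
      then show ?thesis using True by (simp add: mo_def)
    next
      case False
      then show ?thesis by (simp add: mo_def lookup_single when_def)
    qed
  qed
  also have "\<dots> = Poly_Mapping.single (mp p q j) (of_nat (Ee p q j))"
    using fin assms(4) by (simp add: sum.delta')
  finally show ?thesis .
qed

definition jacset :: "nat \<Rightarrow> nat \<Rightarrow> nat set \<Rightarrow> mpoly set" where
  "jacset p q S = {(\<Sum>i\<in>S. g i * Poly_Mapping.single (mp p q i) (of_nat (Ee p q i))) | g. \<forall>i\<in>S. g i \<in> polys_in S}"

lemma jac_eq:
  assumes "1 \<le> p" "1 \<le> q" "S \<subseteq> {0,1}"
  shows "jac S (restr S (fpq p q)) = jacset p q S"
proof -
  have "\<And>g. (\<Sum>i\<in>S. g i * pd i (restr S (fpq p q))) = (\<Sum>i\<in>S. g i * Poly_Mapping.single (mp p q i) (of_nat (Ee p q i)))"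
    using pd_restr[OF assms] by (intro sum.cong) auto
  then show ?thesis unfolding jac_def jacset_def by simp
qed


lemma Ee_pos: "1 \<le> p \<Longrightarrow> 1 \<le> q \<Longrightarrow> 1 \<le> Ee p q i"
  by (simp add: Ee_def)

lemma jac_J1:
  assumes "1 \<le> p" "1 \<le> q" "x \<in> jacset p q S" "\<alpha> \<in> Poly_Mapping.keys x"
  shows "Poly_Mapping.keys \<alpha> \<subseteq> S \<and> (\<exists>i\<in>S. Ee p q i - 1 \<le> Poly_Mapping.lookup \<alpha> i)"
proof -
  obtain g where x: "x = (\<Sum>i\<in>S. g i * Poly_Mapping.single (mp p q i) (of_nat (Ee p q i)))"
    and g: "\<forall>i\<in>S. g i \<in> polys_in S"
    using assms(3) unfolding jacset_def by blast
  have "\<alpha> \<in> (\<Union>i\<in>S. Poly_Mapping.keys (g i * Poly_Mapping.single (mp p q i) (of_nat (Ee p q i))))"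
    using assms(4) unfolding x by (rule subsetD[OF keys_sum])
  then obtain i where i: "i \<in> S"
    and ai: "\<alpha> \<in> Poly_Mapping.keys (g i * Poly_Mapping.single (mp p q i) (of_nat (Ee p q i)))"
    by blast
  have c: "(of_nat (Ee p q i) :: complex) \<noteq> 0" using Ee_pos[OF assms(1,2), of i] by simp
  from ai keys_mult obtain a b where ab: "\<alpha> = a + b" "a \<in> Poly_Mapping.keys (g i)"
    "b \<in> Poly_Mapping.keys (Poly_Mapping.single (mp p q i) (of_nat (Ee p q i) :: complex))"
    by blast
  from ab(3) c have b: "b = mp p q i" by simp
  have "Poly_Mapping.keys a \<subseteq> S" using g i ab(2) unfolding polys_in_def by blast
  moreover have "Poly_Mapping.keys (mp p q i) \<subseteq> {i}" by (simp add: mp_def)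
  ultimately have "Poly_Mapping.keys \<alpha> \<subseteq> S"
    using keys_add[of a "mp p q i"] i ab(1) b by blast
  moreover have "Ee p q i - 1 \<le> Poly_Mapping.lookup \<alpha> i"
    using ab(1) b by (simp add: lookup_add mp_def)
  ultimately show ?thesis using i by blast
qed

lemma keys_minus_nat: "Poly_Mapping.keys ((a::nat\<Rightarrow>\<^sub>0nat) - b) \<subseteq> Poly_Mapping.keys a"
  by (auto simp: in_keys_iff lookup_minus_nat)

lemma jac_J2:
  assumes "1 \<le> p" "1 \<le> q" "S \<subseteq> {0,1}" "x \<in> polys_in S"
    and bad: "\<forall>\<alpha>\<in>Poly_Mapping.keys x. \<exists>i\<in>S. Ee p q i - 1 \<le> Poly_Mapping.lookup \<alpha> i"
  shows "x \<in> jacset p q S"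
proof -
  have fin: "finite S" using assms(3) finite_subset by blast
  define \<iota> where "\<iota> \<alpha> = (SOME i. i \<in> S \<and> Ee p q i - 1 \<le> Poly_Mapping.lookup \<alpha> i)" for \<alpha>
  have \<iota>: "\<iota> \<alpha> \<in> S \<and> Ee p q (\<iota> \<alpha>) - 1 \<le> Poly_Mapping.lookup \<alpha> (\<iota> \<alpha>)" if "\<alpha> \<in> Poly_Mapping.keys x" for \<alpha>
    unfolding \<iota>_def using bad that by (metis (mono_tags, lifting) someI_ex)
  define fib where "fib i = {\<alpha>. \<alpha> \<in> Poly_Mapping.keys x \<and> \<iota> \<alpha> = i}" for i
  define g where "g i = (\<Sum>\<alpha>\<in>fib i. Poly_Mapping.single (\<alpha> - mp p q i) (Poly_Mapping.lookup x \<alpha> / of_nat (Ee p q i)))" for i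
  have gpoly: "g i \<in> polys_in S" for i
  proof -
    have "Poly_Mapping.keys (g i) \<subseteq> (\<Union>\<alpha>\<in>fib i. Poly_Mapping.keys (Poly_Mapping.single (\<alpha> - mp p q i) (Poly_Mapping.lookup x \<alpha> / of_nat (Ee p q i))))"
      unfolding g_def by (rule keys_sum)
    also have "\<dots> \<subseteq> (\<Union>\<alpha>\<in>fib i. {\<alpha> - mp p q i})" by auto
    finally have "Poly_Mapping.keys (g i) \<subseteq> (\<Union>\<alpha>\<in>fib i. {\<alpha> - mp p q i})" .
    moreover have "Poly_Mapping.keys (\<alpha> - mp p q i) \<subseteq> S" if "\<alpha> \<in> fib i" for \<alpha>
      using keys_minus_nat[of \<alpha> "mp p q i"] that assms(4) unfolding fib_def polys_in_def by blast
    ultimately show ?thesis unfolding polys_in_def by blast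
  qed
  have trm: "g i * Poly_Mapping.single (mp p q i) (of_nat (Ee p q i)) = (\<Sum>\<alpha>\<in>fib i. Poly_Mapping.single \<alpha> (Poly_Mapping.lookup x \<alpha>))" for i
  proof -
    have c: "(of_nat (Ee p q i) :: complex) \<noteq> 0" using Ee_pos[OF assms(1,2), of i] by simp
    have "g i * Poly_Mapping.single (mp p q i) (of_nat (Ee p q i)) =
      (\<Sum>\<alpha>\<in>fib i. Poly_Mapping.single (\<alpha> - mp p q i + mp p q i) (Poly_Mapping.lookup x \<alpha> / of_nat (Ee p q i) * of_nat (Ee p q i)))"
      unfolding g_def by (simp add: sum_distrib_right mult_single)
    also have "\<dots> = (\<Sum>\<alpha>\<in>fib i. Poly_Mapping.single \<alpha> (Poly_Mapping.lookup x \<alpha>))"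
    proof (intro sum.cong refl)
      fix \<alpha> assume a: "\<alpha> \<in> fib i"
      then have "Ee p q i - 1 \<le> Poly_Mapping.lookup \<alpha> i" using \<iota> unfolding fib_def by blast
      then have "\<alpha> - mp p q i + mp p q i = \<alpha>"
        by (intro poly_mapping_eqI) (auto simp: lookup_add lookup_minus_nat mp_def lookup_single when_def)
      then show "Poly_Mapping.single (\<alpha> - mp p q i + mp p q i) (Poly_Mapping.lookup x \<alpha> / of_nat (Ee p q i) * of_nat (Ee p q i)) =
          Poly_Mapping.single \<alpha> (Poly_Mapping.lookup x \<alpha>)" using c by simp
    qed
    finally show ?thesis .
  qed
  have "(\<Sum>i\<in>S. g i * Poly_Mapping.single (mp p q i) (of_nat (Ee p q i))) =
        (\<Sum>i\<in>S. \<Sum>\<alpha>\<in>fib i. Poly_Mapping.single \<alpha> (Poly_Mapping.lookup x \<alpha>))"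
    using trm by simp
  also have "\<dots> = (\<Sum>\<alpha>\<in>Poly_Mapping.keys x. Poly_Mapping.single \<alpha> (Poly_Mapping.lookup x \<alpha>))"
    unfolding fib_def
    by (rule sum.group) (use fin \<iota> in auto)
  also have "\<dots> = x" by (rule poly_expand[symmetric])
  finally show ?thesis unfolding jacset_def using gpoly by blast
qed


lemma dvd_im1_iff:
  assumes "2 \<le> m"
  shows "int m dvd (int i - 1) \<longleftrightarrow> i mod m = 1"
proof -
  have "int m dvd (int i - 1) \<longleftrightarrow> int i mod int m = 1 mod int m"
    by (simp add: mod_eq_dvd_iff)
  also have "1 mod int m = 1" using assms by simp
  also have "int i mod int m = int (i mod m)" by (simp add: zmod_int)
  finally show ?thesis by simp
qed

lemma rep2_eq:
  assumes "2 \<le> m" "i mod m \<noteq> 1"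
  shows "rep2 m i = (if i mod m = 0 then m else i mod m)"
  unfolding rep2_def
proof (rule the_equality)
  have "i mod m < m" using assms by simp
  then show "(if i mod m = 0 then m else i mod m) \<in> {2..m} \<and>
     i mod m = (if i mod m = 0 then m else i mod m) mod m"
    using assms by auto
next
  fix u assume u: "u \<in> {2..m} \<and> i mod m = u mod m"
  show "u = (if i mod m = 0 then m else i mod m)"
  proof (cases "u = m")
    case True then show ?thesis using u by simp
  next
    case False
    then have "u < m" using u by auto
    then show ?thesis using u by auto
  qed
qed

lemma jinv_mod:
  assumes "1 \<le> p" "1 \<le> q"
  shows "jinvpq p q i mod p = (if i mod p = 0 then p - 1 else i mod p - 1)"
proof -
  have "jinvpq p q i mod p = (i + p * q - 1) mod p"
    unfolding jinvpq_def by (simp add: mod_mod_cancel)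
  moreover obtain d r where dr: "i = p * d + r" "r = i mod p"
    using div_mult_mod_eq[of i p] by (metis add.commute mult.commute)
  moreover have "r < p" using dr(2) assms by simp
  ultimately show ?thesis
  proof (cases "r = 0")
    case True
    obtain q' where q': "q = Suc q'" using assms(2) by (cases q) auto
    have e: "p * q = p + p * q'" unfolding q' by simp
    have "i + p * q - 1 = (p - 1) + p * (d + q')"
      using e dr(1) True assms(1) by (simp add: distrib_left)
    then have "(i + p * q - 1) mod p = ((p - 1) + p * (d + q')) mod p" by (rule arg_cong)
    also have "\<dots> = (p - 1) mod p" by (rule mod_mult_self2)
    also have "\<dots> = p - 1" using assms by simp
    finally have "(i + p * q - 1) mod p = p - 1" .
    then show ?thesis using True dr(2) \<open>jinvpq p q i mod p = (i + p * q - 1) mod p\<close> by simp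
  next
    case False
    have "i + p * q - 1 = (r - 1) + p * (d + q)"
      using False dr(1) by (simp add: distrib_left)
    then have "(i + p * q - 1) mod p = ((r - 1) + p * (d + q)) mod p" by (rule arg_cong)
    also have "\<dots> = (r - 1) mod p" by (rule mod_mult_self2)
    also have "\<dots> = r - 1" using \<open>r < p\<close> by simp
    finally have "(i + p * q - 1) mod p = r - 1" .
    then show ?thesis using False dr(2) \<open>jinvpq p q i mod p = (i + p * q - 1) mod p\<close> by simp
  qed
qed


lemma jinv_mod_q:
  assumes "1 \<le> p" "1 \<le> q"
  shows "jinvpq p q i mod q = (if i mod q = 0 then q - 1 else i mod q - 1)"
proof -
  have "jinvpq p q i = jinvpq q p i" unfolding jinvpq_def by (simp add: mult.commute)
  then show ?thesis using jinv_mod[of q p i] assms by simp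
qed

lemma jinv0_p: assumes "2 \<le> p" "1 \<le> q"
  shows "jinvpq p q g mod p = 0 \<longleftrightarrow> g mod p = 1"
  using jinv_mod[of p q g] assms by auto

lemma jinv0_q: assumes "1 \<le> p" "2 \<le> q"
  shows "jinvpq p q g mod q = 0 \<longleftrightarrow> g mod q = 1"
  using jinv_mod_q[of p q g] assms by auto

lemma fixset_jinv:
  assumes "2 \<le> p" "2 \<le> q"
  shows "fixset 2 (nupq p q) (jinvpq p q g) = {j. (j = 0 \<and> g mod p = 1) \<or> (j = 1 \<and> g mod q = 1)}"
proof -
  have p0: "real p \<noteq> 0" "real q \<noteq> 0" using assms by auto
  have a: "nupq p q (jinvpq p q g) 0 = 0 \<longleftrightarrow> g mod p = 1"
    using p0 jinv0_p[of p q g] assms by (simp add: nupq_def)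
  have b: "nupq p q (jinvpq p q g) 1 = 0 \<longleftrightarrow> g mod q = 1"
    using p0 jinv0_q[of p q g] assms by (simp add: nupq_def)
  have "{j. j < 2 \<and> nupq p q (jinvpq p q g) j = 0} =
        {j. (j = 0 \<and> nupq p q (jinvpq p q g) 0 = 0) \<or> (j = 1 \<and> nupq p q (jinvpq p q g) 1 = 0)}"
    by (auto simp: less_2_cases_iff)
  then show ?thesis unfolding fixset_def a b by simp
qed

definition Am :: "nat \<Rightarrow> nat \<Rightarrow> nat" where
  "Am m r = (if r = 0 then 0 else m - r)"

lemma rep2_Am:
  assumes "2 \<le> m" "i mod m \<noteq> 1"
  shows "m - rep2 m i = Am m (i mod m)"
  using rep2_eq[OF assms] by (simp add: Am_def)

lemma Am_le: assumes "2 \<le> m" "r < m" "r \<noteq> 1" shows "Am m r \<le> m - 2"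
  using assms by (auto simp: Am_def)

lemma Am_inj: assumes "r < m" "r \<noteq> 1" "r' < m" "r' \<noteq> 1" "Am m r = Am m r'"
  shows "r = r'"
  using assms by (auto simp: Am_def split: if_splits)

lemma card_B: assumes "2 \<le> p" "2 \<le> q"
  shows "card {(a, b). a \<le> p - 2 \<and> b \<le> q - 2} = (p - 1) * (q - 1)"
proof -
  have "{(a, b). a \<le> p - 2 \<and> b \<le> q - 2} = {..p - 2} \<times> {..q - 2}" by auto
  then have "card {(a, b). a \<le> p - 2 \<and> b \<le> q - 2} = Suc (p - 2) * Suc (q - 2)"
    by (simp only: card_cartesian_product card_atMost)
  moreover have "Suc (p - 2) = p - 1" "Suc (q - 2) = q - 1" using assms by arith+
  ultimately show ?thesis by simp
qed

lemma bij_I: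
  assumes "2 \<le> p" "2 \<le> q" "coprime p q"
  shows "bij_betw (\<lambda>i. (Am p (i mod p), Am q (i mod q)))
     {i. i < p * q \<and> i mod p \<noteq> 1 \<and> i mod q \<noteq> 1} {(a, b). a \<le> p - 2 \<and> b \<le> q - 2}"
  unfolding bij_betw_def
proof (intro conjI)
  let ?I = "{i. i < p * q \<and> i mod p \<noteq> 1 \<and> i mod q \<noteq> 1}"
  show "inj_on (\<lambda>i. (Am p (i mod p), Am q (i mod q))) ?I"
  proof (rule inj_onI)
    fix i i' assume i: "i \<in> ?I" and i': "i' \<in> ?I"
      and eq: "(Am p (i mod p), Am q (i mod q)) = (Am p (i' mod p), Am q (i' mod q))"
    have "i mod p = i' mod p"
      using Am_inj[of "i mod p" p "i' mod p"] i i' eq assms by auto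
    moreover have "i mod q = i' mod q"
      using Am_inj[of "i mod q" q "i' mod q"] i i' eq assms by auto
    ultimately have "[i = i'] (mod p * q)"
      using coprime_cong_mult_nat[of i i' p q] assms(3) by (simp add: cong_def)
    then show "i = i'" using i i' by (simp add: cong_def)
  qed
  show "(\<lambda>i. (Am p (i mod p), Am q (i mod q))) ` ?I = {(a, b). a \<le> p - 2 \<and> b \<le> q - 2}"
  proof
    show "(\<lambda>i. (Am p (i mod p), Am q (i mod q))) ` ?I \<subseteq> {(a, b). a \<le> p - 2 \<and> b \<le> q - 2}"
      using Am_le assms by auto
  next
    show "{(a, b). a \<le> p - 2 \<and> b \<le> q - 2} \<subseteq> (\<lambda>i. (Am p (i mod p), Am q (i mod q))) ` ?I"
    proof
      fix ab assume "ab \<in> {(a, b). a \<le> p - 2 \<and> b \<le> q - 2}"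
      then obtain a b where ab: "ab = (a, b)" "a \<le> p - 2" "b \<le> q - 2" by blast
      define rp where "rp = (if a = 0 then 0 else p - a)"
      define rq where "rq = (if b = 0 then 0 else q - b)"
      have rp: "rp < p" "rp \<noteq> 1" "Am p rp = a" using ab assms unfolding rp_def Am_def by auto
      have rq: "rq < q" "rq \<noteq> 1" "Am q rq = b" using ab assms unfolding rq_def Am_def by auto
      obtain x where x: "\<forall>j\<in>{0::nat,1}. [x = (if j = 0 then rp else rq)] (mod (if j = 0 then p else q))"
        using chinese_remainder_nat[of "{0::nat,1}" "\<lambda>j. if j = 0 then p else q" "\<lambda>j. if j = 0 then rp else rq"]
          assms(3) by (auto simp: coprime_commute)
      have xp: "x mod p = rp" using x rp(1) by (auto simp: cong_def)
      have xq: "x mod q = rq" using x rq(1) by (auto simp: cong_def)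
      define i where "i = x mod (p * q)"
      have ip: "i mod p = rp" unfolding i_def using xp by (simp add: mod_mod_cancel)
      have iq: "i mod q = rq" unfolding i_def using xq by (metis mod_mod_cancel dvd_triv_right)
      have "i < p * q" unfolding i_def using assms by simp
      then have "i \<in> ?I" using ip iq rp rq by simp
      moreover have "ab = (Am p (i mod p), Am q (i mod q))" using ip iq rp rq ab by simp
      ultimately show "ab \<in> (\<lambda>i. (Am p (i mod p), Am q (i mod q))) ` ?I" by blast
    qed
  qed
qed

lemma wdeg_monexp:
  "wdeg qw (monexp a b) = real a * qw 0 + real b * qw 1"
proof -
  have k: "Poly_Mapping.keys (monexp a b) \<subseteq> {0,1}"
    by (auto simp: monexp_def in_keys_iff lookup_add lookup_single when_def split: if_splits)
  have l0: "Poly_Mapping.lookup (monexp a b) 0 = a" and l1: "Poly_Mapping.lookup (monexp a b) 1 = b"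
    by (simp_all add: monexp_def lookup_add lookup_single)
  have "wdeg qw (monexp a b) = (\<Sum>i\<in>{0,1}. real (Poly_Mapping.lookup (monexp a b) i) * qw i)"
    unfolding wdeg_def
    by (rule sum.mono_neutral_left) (use k in \<open>auto simp: in_keys_iff\<close>)
  then show ?thesis using l0 l1 by simp
qed

lemma bideg_lemma:
  assumes "2 \<le> p" "2 \<le> q" "i mod p \<noteq> 1" "i mod q \<noteq> 1"
  shows "dual_bideg 2 (qwpq p q) (nupq p q) (jinvpq p q) 0 i =
     (- wdeg (qwpq p q) (monexp (p - rep2 p i) (q - rep2 q i)),
      wdeg (qwpq p q) (monexp (p - rep2 p i) (q - rep2 q i)))"
proof -
  define k where "k = jinvpq p q i"
  define A where "A = Am p (i mod p)"
  define B where "B = Am q (i mod q)"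
  have rA: "p - rep2 p i = A" unfolding A_def using rep2_Am assms by simp
  have rB: "q - rep2 q i = B" unfolding B_def using rep2_Am assms by simp
  have kp: "k mod p + 1 + A = p"
    unfolding k_def A_def using jinv_mod[of p q i] assms mod_less_divisor[of p i]
    by (auto simp: Am_def)
  have kq: "k mod q + 1 + B = q"
    unfolding k_def B_def using jinv_mod_q[of p q i] assms mod_less_divisor[of q i]
    by (auto simp: Am_def)
  have kpr: "real (k mod p) = real p - 1 - real A" using kp by linarith
  have kqr: "real (k mod q) = real q - 1 - real B" using kq by linarith
  have nz: "k mod p \<noteq> 0" "k mod q \<noteq> 0"
    unfolding k_def using jinv0_p[of p q i] jinv0_q[of p q i] assms by auto
  have pp: "real p > 0" "real q > 0" using assms by auto
  have S: "{j. j < 2 \<and> nupq p q k j \<noteq> 0} = {0,1}"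
    using nz pp by (auto simp: nupq_def less_2_cases_iff)
  have sh: "shift 2 (qwpq p q) (nupq p q) k = (real (k mod p) / p - 1 / p) + (real (k mod q) / q - 1 / q)"
    unfolding shift_def S by (simp add: nupq_def qwpq_def)
  have shb: "shiftbar 2 (qwpq p q) (nupq p q) k = (1 - real (k mod p) / p - 1 / p) + (1 - real (k mod q) / q - 1 / q)"
    unfolding shiftbar_def S by (simp add: nupq_def qwpq_def)
  have cd: "cdim 2 (qwpq p q) = (1 - 2 / p) + (1 - 2 / q)"
    unfolding cdim_def by (simp add: qwpq_def numeral_2_eq_2)
  have w0: "wdeg (qwpq p q) 0 = 0" by (simp add: wdeg_def)
  have wd: "wdeg (qwpq p q) (monexp A B) = A / p + B / q"
    by (simp add: wdeg_monexp qwpq_def)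
  have e1: "(real (k mod p) / p - 1 / p) + (real (k mod q) / q - 1 / q) - ((1 - 2 / p) + (1 - 2 / q)) = - (A / p + B / q)"
    unfolding kpr kqr using pp by (simp add: field_simps)
  have e2: "(1 - real (k mod p) / p - 1 / p) + (1 - real (k mod q) / q - 1 / q) = A / p + B / q"
    unfolding kpr kqr using pp by (simp add: field_simps)
  show ?thesis unfolding dual_bideg_def k_def[symmetric] rA rB w0 wd sh shb cd
    using e1 e2 by simp
qed


lemma cis_pow: "cis x ^ n = cis (real n * x)"
  by (induction n) (simp_all add: cis_mult algebra_simps)

lemma polys_in_0: "0 \<in> polys_in S" by (simp add: polys_in_def)
lemma polys_in_1: "1 \<in> polys_in S" by (simp add: polys_in_def)

lemma zero_jac: "(0::mpoly) \<in> jac S X"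
  unfolding jac_def by (auto intro!: exI[of _ "\<lambda>_. 0"] simp: polys_in_0)

lemma milnor_refl: "milnor_eq S F a a"
  by (simp add: milnor_eq_def zero_jac)

lemma milnor_empty: "milnor_eq {} F a b \<longleftrightarrow> a = b"
  by (simp add: milnor_eq_def jac_def)

lemma diag_subst_0: "diag_subst c 0 = 0" by (simp add: diag_subst_def)
lemma diag_subst_1: "diag_subst c 1 = 1" by (simp add: diag_subst_def)

lemma const_mult: "const a * const b = const (a * b)" by (simp add: const_def mult_single)
lemma const_1: "const 1 = 1" by (simp add: const_def)
lemma const_eq_0: "const c = 0 \<longleftrightarrow> c = 0"
  by (metis const_def lookup_single_eq single_zero)

lemma detr_nz: "detr n nu h \<noteq> 0"
  by (simp add: detr_def lam_def)

lemma polys_in_empty: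
  assumes "x \<in> polys_in {}"
  shows "x = const (Poly_Mapping.lookup x 0)"
proof (rule poly_mapping_eqI)
  fix \<alpha>
  show "Poly_Mapping.lookup x \<alpha> = Poly_Mapping.lookup (const (Poly_Mapping.lookup x 0)) \<alpha>"
  proof (cases "\<alpha> = 0")
    case True then show ?thesis by (simp add: const_def)
  next
    case False
    then have "\<alpha> \<notin> Poly_Mapping.keys x" using assms unfolding polys_in_def by auto
    then show ?thesis using False by (simp add: const_def in_keys_iff lookup_single when_def)
  qed
qed

lemma act_lookup:
  "Poly_Mapping.lookup (const (chi n nu (\<lambda>_. 0) h) * phi n nu (\<lambda>_. 0) h k a) \<alpha> =
   detr_fix n nu h k * (\<Prod>i\<in>Poly_Mapping.keys \<alpha>. lam nu h i ^ Poly_Mapping.lookup \<alpha> i) * Poly_Mapping.lookup a \<alpha>"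
proof -
  have "const (chi n nu (\<lambda>_. 0) h) * phi n nu (\<lambda>_. 0) h k a =
    const (chi n nu (\<lambda>_. 0) h * ((-1) ^ (0 * 0) * inverse (detr n nu h) * detr_fix n nu h k)) * diag_subst (lam nu h) a"
    unfolding phi_def by (simp only: mult.assoc[symmetric] const_mult)
  then show ?thesis using detr_nz[of n nu h]
    by (simp add: chi_def lookup_const_mult lookup_diag_subst)
qed

lemma cis_ne1_single:
  assumes "0 < c" "c < m"
  shows "cis (real c * (2 * pi / real m)) \<noteq> 1"
proof
  assume "cis (real c * (2 * pi / real m)) = 1"
  then have "cos (real c * (2 * pi / real m)) = 1" by (metis cis.simps(1) one_complex.simps(1))
  then obtain n :: int where n: "real c * (2 * pi / real m) = n * 2 * pi" by (auto simp: cos_one_2pi_int)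
  have m0: "real m > 0" using assms by simp
  from n have "real c = n * real m" using m0 by (simp add: field_simps)
  then have "int c = n * int m" by (metis of_int_mult of_int_of_nat_eq of_int_eq_iff)
  moreover have "0 < int c" "int c < int m" using assms by auto
  moreover have "int m > 0" using assms by simp
  ultimately show False
  proof (cases "n \<le> 0")
    case True
    then have "n * int m \<le> 0" using \<open>int m > 0\<close> by (simp add: mult_nonpos_nonneg)
    then show False using \<open>int c = n * int m\<close> \<open>0 < int c\<close> by simp
  next
    case False
    then have "n * int m \<ge> int m" using mult_right_mono[of 1 n "int m"] \<open>int m > 0\<close> by simp
    then show False using \<open>int c = n * int m\<close> \<open>int c < int m\<close> by linarith
  qed
qed


lemma cis_ne1_two:
  assumes "coprime p q" "0 < a" "a < p" "0 < b" "b < q"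
  shows "cis (real a * (2 * pi / real p)) * cis (real b * (2 * pi / real q)) \<noteq> 1"
proof
  assume "cis (real a * (2 * pi / real p)) * cis (real b * (2 * pi / real q)) = 1"
  then have "cis (real a * (2 * pi / real p) + real b * (2 * pi / real q)) = 1" by (simp add: cis_mult)
  then have "cos (real a * (2 * pi / real p) + real b * (2 * pi / real q)) = 1" by (metis cis.simps(1) one_complex.simps(1))
  then obtain n :: int where n: "real a * (2 * pi / real p) + real b * (2 * pi / real q) = n * 2 * pi"
    by (auto simp: cos_one_2pi_int)
  have p0: "real p > 0" "real q > 0" using assms by auto
  from n have "(2 * pi) * (real a * real q + real b * real p) = (2 * pi) * (n * real p * real q)"
    using p0 by (simp add: field_simps)
  then have "real a * real q + real b * real p = n * real p * real q" by simp
  then have "int a * int q + int b * int p = n * int p * int q"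
    by (metis (mono_tags) of_int_add of_int_mult of_int_of_nat_eq of_int_eq_iff)
  then have "int a * int q = int p * (n * int q - int b)" by (simp add: algebra_simps)
  then have "int p dvd int (a * q)" by simp
  then have "p dvd a * q" by (simp only: of_nat_dvd_iff)
  then have "p dvd a" using assms(1) by (simp add: coprime_dvd_mult_left_iff)
  then show False using assms by (simp add: nat_dvd_not_less)
qed

lemma fixset_sub: "fixset 2 nu k \<subseteq> {0,1}"
  by (auto simp: fixset_def less_2_cases_iff)

lemma lam1:
  assumes "2 \<le> p" "2 \<le> q" "i \<in> {0,1}"
  shows "lam (nupq p q) 1 i = cis (2 * pi / real (Ee p q i))"
  using assms by (auto simp: lam_def nupq_def Ee_def)

lemma mu_ne_1:
  assumes "2 \<le> p" "2 \<le> q" "coprime p q" "S = fixset 2 (nupq p q) k" "S \<noteq> {}"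
    and ka: "Poly_Mapping.keys \<alpha> \<subseteq> S" and nb: "\<forall>i\<in>S. \<not> (Ee p q i - 1 \<le> Poly_Mapping.lookup \<alpha> i)"
  shows "detr_fix 2 (nupq p q) 1 k * (\<Prod>i\<in>Poly_Mapping.keys \<alpha>. lam (nupq p q) 1 i ^ Poly_Mapping.lookup \<alpha> i) \<noteq> 1"
proof -
  let ?w = "lam (nupq p q) 1"
  have S2: "S \<subseteq> {0,1}" using assms(4) fixset_sub by simp
  have fin: "finite S" using S2 finite_subset by blast
  have "(\<Prod>i\<in>Poly_Mapping.keys \<alpha>. ?w i ^ Poly_Mapping.lookup \<alpha> i) = (\<Prod>i\<in>S. ?w i ^ Poly_Mapping.lookup \<alpha> i)"
    by (rule prod.mono_neutral_left) (use fin ka in \<open>auto simp: in_keys_iff\<close>)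
  moreover have "detr_fix 2 (nupq p q) 1 k = (\<Prod>i\<in>S. ?w i)"
    unfolding detr_fix_def assms(4) ..
  ultimately have e: "detr_fix 2 (nupq p q) 1 k * (\<Prod>i\<in>Poly_Mapping.keys \<alpha>. ?w i ^ Poly_Mapping.lookup \<alpha> i)
     = (\<Prod>i\<in>S. ?w i ^ Suc (Poly_Mapping.lookup \<alpha> i))"
    by (simp add: prod.distrib[symmetric])
  have W: "?w i ^ Suc (Poly_Mapping.lookup \<alpha> i) = cis (real (Suc (Poly_Mapping.lookup \<alpha> i)) * (2 * pi / real (Ee p q i)))"
    if "i \<in> S" for i
  proof -
    have li: "i \<in> {0,1}" using S2 that by blast
    have "?w i ^ Suc (Poly_Mapping.lookup \<alpha> i) = cis (2 * pi / real (Ee p q i)) ^ Suc (Poly_Mapping.lookup \<alpha> i)"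
      by (simp only: lam1[OF assms(1,2) li])
    also have "\<dots> = cis (real (Suc (Poly_Mapping.lookup \<alpha> i)) * (2 * pi / real (Ee p q i)))"
      by (rule cis_pow)
    finally show ?thesis .
  qed
  have lt: "0 < Suc (Poly_Mapping.lookup \<alpha> i) \<and> Suc (Poly_Mapping.lookup \<alpha> i) < Ee p q i" if "i \<in> S" for i
    using nb that by auto
  have E0: "Ee p q 0 = p" and E1: "Ee p q 1 = q" by (simp_all add: Ee_def)
  show ?thesis
  proof (cases "0 \<in> S")
    case True
    show ?thesis
    proof (cases "1 \<in> S")
      case True2: True
      have "S = {0,1}" using S2 True True2 by auto
      then show ?thesis unfolding e using W[of 0] W[of 1] lt[of 0] lt[of 1] True True2
          cis_ne1_two[OF assms(3), of "Suc (Poly_Mapping.lookup \<alpha> 0)" "Suc (Poly_Mapping.lookup \<alpha> 1)"]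
        by (simp add: Ee_def)
    next
      case False
      have "S = {0}" using S2 True False by auto
      then show ?thesis unfolding e using W[of 0] lt[of 0] True
          cis_ne1_single[of "Suc (Poly_Mapping.lookup \<alpha> 0)" p] by (simp add: Ee_def)
    qed
  next
    case False
    have "S = {1}" using S2 False assms(5) by auto
    then show ?thesis unfolding e using W[of 1] lt[of 1]
        cis_ne1_single[of "Suc (Poly_Mapping.lookup \<alpha> 1)" q] by (simp add: Ee_def)
  qed
qed

lemma vanish:
  assumes "2 \<le> p" "2 \<le> q" "coprime p q" "S = fixset 2 (nupq p q) k" "S \<noteq> {}"
    and a: "a \<in> polys_in S"
    and inv: "milnor_eq S (fpq p q) (const (chi 2 (nupq p q) (\<lambda>_. 0) 1) * phi 2 (nupq p q) (\<lambda>_. 0) 1 k a) a"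
  shows "milnor_eq S (fpq p q) a 0"
proof -
  let ?act = "const (chi 2 (nupq p q) (\<lambda>_. 0) 1) * phi 2 (nupq p q) (\<lambda>_. 0) 1 k a"
  have S2: "S \<subseteq> {0,1}" using assms(4) fixset_sub by simp
  have p1: "1 \<le> p" "1 \<le> q" using assms by auto
  have J: "?act - a \<in> jacset p q S"
    using inv jac_eq[OF p1 S2] by (simp add: milnor_eq_def)
  have bad: "\<forall>\<alpha>\<in>Poly_Mapping.keys a. \<exists>i\<in>S. Ee p q i - 1 \<le> Poly_Mapping.lookup \<alpha> i"
  proof
    fix \<alpha> assume al: "\<alpha> \<in> Poly_Mapping.keys a"
    have ka: "Poly_Mapping.keys \<alpha> \<subseteq> S" using a al unfolding polys_in_def by blast
    show "\<exists>i\<in>S. Ee p q i - 1 \<le> Poly_Mapping.lookup \<alpha> i"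
    proof (rule ccontr)
      assume nb: "\<not> (\<exists>i\<in>S. Ee p q i - 1 \<le> Poly_Mapping.lookup \<alpha> i)"
      let ?mu = "detr_fix 2 (nupq p q) 1 k * (\<Prod>i\<in>Poly_Mapping.keys \<alpha>. lam (nupq p q) 1 i ^ Poly_Mapping.lookup \<alpha> i)"
      have mu: "?mu \<noteq> 1" using mu_ne_1[OF assms(1-5) ka] nb by blast
      have "Poly_Mapping.lookup (?act - a) \<alpha> = (?mu - 1) * Poly_Mapping.lookup a \<alpha>"
        by (simp add: lookup_minus act_lookup algebra_simps)
      moreover have "Poly_Mapping.lookup a \<alpha> \<noteq> 0" using al by (simp add: in_keys_iff)
      ultimately have "\<alpha> \<in> Poly_Mapping.keys (?act - a)" using mu by (simp add: in_keys_iff)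
      then show False using jac_J1[OF p1 J] nb by blast
    qed
  qed
  have "a \<in> jacset p q S" by (rule jac_J2[OF p1 S2 a bad])
  then show ?thesis using jac_eq[OF p1 S2] by (simp add: milnor_eq_def)
qed


lemma keys_monexp: "Poly_Mapping.keys (monexp a b) \<subseteq> {0,1}"
  by (auto simp: monexp_def in_keys_iff lookup_add lookup_single when_def split: if_splits)

lemma lookup_monexp: "Poly_Mapping.lookup (monexp a b) 0 = a" "Poly_Mapping.lookup (monexp a b) 1 = b"
  "Poly_Mapping.lookup (monexp a b) (Suc 0) = b"
  by (simp_all add: monexp_def lookup_add lookup_single)

lemma monexp_eq_iff: "monexp a b = monexp a' b' \<longleftrightarrow> a = a' \<and> b = b'"
  by (metis lookup_monexp)

lemma mono_eq_monexp:
  assumes "Poly_Mapping.keys (\<alpha>::mono) \<subseteq> {0,1}"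
  shows "\<alpha> = monexp (Poly_Mapping.lookup \<alpha> 0) (Poly_Mapping.lookup \<alpha> 1)"
proof (rule poly_mapping_eqI)
  fix k
  show "Poly_Mapping.lookup \<alpha> k = Poly_Mapping.lookup (monexp (Poly_Mapping.lookup \<alpha> 0) (Poly_Mapping.lookup \<alpha> 1)) k"
  proof (cases "k \<in> {0,1}")
    case True then show ?thesis by (auto simp: lookup_monexp)
  next
    case False
    then have "k \<notin> Poly_Mapping.keys \<alpha>" using assms by blast
    then show ?thesis using False by (simp add: in_keys_iff monexp_def lookup_add lookup_single when_def)
  qed
qed

lemma const_mon: "const c * mon a b = Poly_Mapping.single (monexp a b) c"
  by (simp add: const_def mon_def mult_single)

lemma lookup_X:
  "Poly_Mapping.lookup (\<Sum>(a, b)\<in>B. const (c (a, b)) * mon a b) \<alpha> =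
   (\<Sum>x\<in>B. if monexp (fst x) (snd x) = \<alpha> then c x else 0)"
  by (simp add: lookup_sum split_beta const_mon lookup_single when_def)

lemma lookup_X_monexp:
  assumes "finite B"
  shows "Poly_Mapping.lookup (\<Sum>(a, b)\<in>B. const (c (a, b)) * mon a b) (monexp a b) =
         (if (a, b) \<in> B then c (a, b) else 0)"
proof -
  have "\<And>x. (monexp (fst x) (snd x) = monexp a b) = (x = (a, b))"
    by (auto simp: monexp_eq_iff)
  then show ?thesis unfolding lookup_X using assms by (simp add: sum.delta')
qed

lemma lookup_X_nz:
  assumes "Poly_Mapping.lookup (\<Sum>(a, b)\<in>B. const (c (a, b)) * mon a b) \<alpha> \<noteq> 0"
  shows "\<exists>x\<in>B. monexp (fst x) (snd x) = \<alpha>"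
proof (rule ccontr)
  assume "\<not> (\<exists>x\<in>B. monexp (fst x) (snd x) = \<alpha>)"
  then have "(\<Sum>x\<in>B. if monexp (fst x) (snd x) = \<alpha> then c x else 0) = 0"
    by (intro sum.neutral) auto
  then show False using assms unfolding lookup_X by simp
qed

lemma sum_du:
  assumes "finite I"
  shows "(\<Sum>j\<in>I. const (c j) * dual_unit j g) = (if g \<in> I then const (c g) else 0)"
proof -
  have "(\<Sum>j\<in>I. const (c j) * dual_unit j g) = (\<Sum>j\<in>I. if g = j then const (c j) else 0)"
    by (intro sum.cong) (auto simp: dual_unit_def)
  then show ?thesis using assms by (simp add: sum.delta)
qed

lemma lessThan2: "{..<2::nat} = {0,1}" by auto


theorem mainTheorem11:
  fixes p q :: nat
  assumes "2 \<le> p" and "2 \<le> q" and "coprime p q"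
  shows
    "let G = {..<p * q}; nu = nupq p q; jinv = jinvpq p q; F = fpq p q;
         sg = (\<lambda>_::nat. 0::nat); qw = qwpq p q;
         I = {i. i < p * q \<and> \<not> int p dvd (int i - 1) \<and> \<not> int q dvd (int i - 1)};
         B = {(a, b). a \<le> p - 2 \<and> b \<le> q - 2}
     in card I = (p - 1) * (q - 1)
      \<and> (\<forall>i\<in>I. dual_invariant 2 nu sg jinv G F (dual_unit i))
      \<and> (\<forall>c. dual_equiv 2 nu jinv G F (\<lambda>g. \<Sum>i\<in>I. const (c i) * dual_unit i g) (\<lambda>_. 0)
              \<longrightarrow> (\<forall>i\<in>I. c i = 0))
      \<and> (\<forall>w. dual_invariant 2 nu sg jinv G F w
              \<longrightarrow> (\<exists>c. dual_equiv 2 nu jinv G F w (\<lambda>g. \<Sum>i\<in>I. const (c i) * dual_unit i g)))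
      \<and> (\<forall>c. milnor_eq {..<2} F (\<Sum>(a, b)\<in>B. const (c (a, b)) * mon a b) 0
              \<longrightarrow> (\<forall>ab\<in>B. c ab = 0))
      \<and> (\<forall>x\<in>polys_in {..<2}. \<exists>c. milnor_eq {..<2} F x (\<Sum>(a, b)\<in>B. const (c (a, b)) * mon a b))
      \<and> bij_betw (\<lambda>i. (p - rep2 p i, q - rep2 q i)) I B
      \<and> (\<forall>i\<in>I. dual_bideg 2 qw nu jinv 0 i =
                 (- wdeg qw (monexp (p - rep2 p i) (q - rep2 q i)),
                  wdeg qw (monexp (p - rep2 p i) (q - rep2 q i))))"
proof -
  have p1: "1 \<le> p" "1 \<le> q" using assms by auto
  define I where "I = {i. i < p * q \<and> \<not> int p dvd (int i - 1) \<and> \<not> int q dvd (int i - 1)}"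
  define B where "B = {(a, b). a \<le> p - 2 \<and> b \<le> q - 2}"
  let ?G = "{..<p * q}"
  let ?nu = "nupq p q"
  let ?j = "jinvpq p q"
  let ?F = "fpq p q"
  let ?sg = "\<lambda>_::nat. 0::nat"
  have I': "I = {i. i < p * q \<and> i mod p \<noteq> 1 \<and> i mod q \<noteq> 1}"
    unfolding I_def using dvd_im1_iff[OF assms(1)] dvd_im1_iff[OF assms(2)] by simp
  have finI: "finite I" unfolding I' by auto
  have finB: "finite B" unfolding B_def
    by (rule finite_subset[of _ "{..p - 2} \<times> {..q - 2}"]) auto
  have IG: "I \<subseteq> ?G" unfolding I' by auto
  have fixI: "fixset 2 ?nu (?j g) = {} \<longleftrightarrow> g \<in> I" if "g \<in> ?G" for g
    using that unfolding I' fixset_jinv[OF assms(1,2)] by auto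
  have bij: "bij_betw (\<lambda>i. (p - rep2 p i, q - rep2 q i)) I B"
  proof -
    have "bij_betw (\<lambda>i. (Am p (i mod p), Am q (i mod q))) I B"
      unfolding I' B_def by (rule bij_I[OF assms])
    moreover have "\<And>i. i \<in> I \<Longrightarrow> (p - rep2 p i, q - rep2 q i) = (Am p (i mod p), Am q (i mod q))"
      unfolding I' using rep2_Am assms by auto
    ultimately show ?thesis using bij_betw_cong by (metis (no_types, lifting))
  qed
  have c1: "card I = (p - 1) * (q - 1)"
    using bij_betw_same_card[OF bij] card_B[OF assms(1,2)] unfolding B_def by simp
  have c2: "\<forall>i\<in>I. dual_invariant 2 ?nu ?sg ?j ?G ?F (dual_unit i)"
  proof
    fix i assume i: "i \<in> I"
    have sp: "dual_unit i \<in> dual_space 2 ?nu ?j ?G"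
      unfolding dual_space_def dual_unit_def using i IG by (auto simp: polys_in_0 polys_in_1)
    have eq: "dual_equiv 2 ?nu ?j ?G ?F (dual_act 2 ?nu ?sg ?j ?G h (dual_unit i)) (dual_unit i)" for h
      unfolding dual_equiv_def
    proof
      fix g assume g: "g \<in> ?G"
      show "milnor_eq (fixset 2 ?nu (?j g)) ?F (dual_act 2 ?nu ?sg ?j ?G h (dual_unit i) g) (dual_unit i g)"
      proof (cases "g = i")
        case True
        have fe: "fixset 2 ?nu (?j i) = {}" using fixI[OF g] True i by simp
        have "dual_act 2 ?nu ?sg ?j ?G h (dual_unit i) g = 1"
          using g True detr_nz[of 2 ?nu h]
          by (simp add: dual_act_def dual_unit_def phi_def chi_def detr_fix_def fe diag_subst_1 const_mult const_1)
        then show ?thesis using True by (simp add: dual_unit_def milnor_refl)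
      next
        case False
        have "dual_act 2 ?nu ?sg ?j ?G h (dual_unit i) g = 0"
          using g False by (simp add: dual_act_def dual_unit_def phi_def diag_subst_0)
        then show ?thesis using False by (simp add: dual_unit_def milnor_refl)
      qed
    qed
    show "dual_invariant 2 ?nu ?sg ?j ?G ?F (dual_unit i)"
      unfolding dual_invariant_def using sp eq by blast
  qed
  have c3: "\<forall>c. dual_equiv 2 ?nu ?j ?G ?F (\<lambda>g. \<Sum>i\<in>I. const (c i) * dual_unit i g) (\<lambda>_. 0)
              \<longrightarrow> (\<forall>i\<in>I. c i = 0)"
  proof (intro allI impI ballI)
    fix c i assume H: "dual_equiv 2 ?nu ?j ?G ?F (\<lambda>g. \<Sum>i\<in>I. const (c i) * dual_unit i g) (\<lambda>_. 0)"
      and i: "i \<in> I"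
    have iG: "i \<in> ?G" using i IG by blast
    have "milnor_eq (fixset 2 ?nu (?j i)) ?F (\<Sum>j\<in>I. const (c j) * dual_unit j i) 0"
      using H iG unfolding dual_equiv_def by blast
    then have "const (c i) = 0"
      using fixI[OF iG] i sum_du[OF finI, of c i] by (simp add: milnor_empty)
    then show "c i = 0" by (simp add: const_eq_0)
  qed
  have "2 * 1 \<le> p * q" using assms(1) p1(2) by (rule mult_le_mono)
  then have one: "1 \<in> ?G" by simp
  have c4: "\<forall>w. dual_invariant 2 ?nu ?sg ?j ?G ?F w
              \<longrightarrow> (\<exists>c. dual_equiv 2 ?nu ?j ?G ?F w (\<lambda>g. \<Sum>i\<in>I. const (c i) * dual_unit i g))"
  proof (intro allI impI)
    fix w assume H: "dual_invariant 2 ?nu ?sg ?j ?G ?F w"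
    have sp: "\<forall>g\<in>?G. w g \<in> polys_in (fixset 2 ?nu (?j g))"
      using H unfolding dual_invariant_def dual_space_def by blast
    have inv1: "dual_equiv 2 ?nu ?j ?G ?F (dual_act 2 ?nu ?sg ?j ?G 1 w) w"
      using H one unfolding dual_invariant_def by blast
    define c where "c i = Poly_Mapping.lookup (w i) 0" for i
    have "dual_equiv 2 ?nu ?j ?G ?F w (\<lambda>g. \<Sum>i\<in>I. const (c i) * dual_unit i g)"
      unfolding dual_equiv_def
    proof
      fix g assume g: "g \<in> ?G"
      show "milnor_eq (fixset 2 ?nu (?j g)) ?F (w g) (\<Sum>i\<in>I. const (c i) * dual_unit i g)"
      proof (cases "g \<in> I")
        case True
        have fe: "fixset 2 ?nu (?j g) = {}" using fixI[OF g] True by simp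
        have "w g = const (c g)" unfolding c_def
        proof (rule polys_in_empty)
          have "w g \<in> polys_in (fixset 2 ?nu (?j g))" by (rule bspec[OF sp g])
          then show "w g \<in> polys_in {}" using fe by simp
        qed
        then show ?thesis using True sum_du[OF finI, of c g] fe by (simp add: milnor_empty)
      next
        case False
        have fe: "fixset 2 ?nu (?j g) \<noteq> {}" using fixI[OF g] False by simp
        have m: "milnor_eq (fixset 2 ?nu (?j g)) ?F
            (const (chi 2 ?nu ?sg 1) * phi 2 ?nu ?sg 1 (?j g) (w g)) (w g)"
          using inv1 g unfolding dual_equiv_def dual_act_def by auto
        have "milnor_eq (fixset 2 ?nu (?j g)) ?F (w g) 0"
          by (rule vanish[OF assms refl fe]) (use sp g m in auto)
        then show ?thesis using False sum_du[OF finI, of c g] by simp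
      qed
    qed
    then show "\<exists>c. dual_equiv 2 ?nu ?j ?G ?F w (\<lambda>g. \<Sum>i\<in>I. const (c i) * dual_unit i g)" by blast
  qed
  have J01: "jac {0,1} (restr {0,1} ?F) = jacset p q {0,1}" by (rule jac_eq[OF p1]) simp
  have c5: "\<forall>c. milnor_eq {..<2} ?F (\<Sum>(a, b)\<in>B. const (c (a, b)) * mon a b) 0
              \<longrightarrow> (\<forall>ab\<in>B. c ab = 0)"
  proof (intro allI impI ballI)
    fix c ab assume H: "milnor_eq {..<2} ?F (\<Sum>(a, b)\<in>B. const (c (a, b)) * mon a b) 0" and ab: "ab \<in> B"
    let ?X = "\<Sum>(a, b)\<in>B. const (c (a, b)) * mon a b"
    have X: "?X \<in> jacset p q {0,1}" using H J01 unfolding milnor_eq_def lessThan2 by simp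
    obtain a b where ab2: "ab = (a, b)" by (cases ab)
    have ale: "a \<le> p - 2" using ab ab2 unfolding B_def by simp
    show "c ab = 0"
    proof (rule ccontr)
      assume "c ab \<noteq> 0"
      then have "Poly_Mapping.lookup ?X (monexp a b) \<noteq> 0"
        using lookup_X_monexp[OF finB, of c a b] ab ab2 by simp
      then have "monexp a b \<in> Poly_Mapping.keys ?X" by (simp add: in_keys_iff)
      then have "\<exists>i\<in>{0,1}. Ee p q i - 1 \<le> Poly_Mapping.lookup (monexp a b) i"
        by (rule conjunct2[OF jac_J1[OF p1 X]])
      then obtain i where i: "i \<in> {0,1}" and le: "Ee p q i - 1 \<le> Poly_Mapping.lookup (monexp a b) i"
        by (rule bexE)
      have ble: "b \<le> q - 2" using ab ab2 unfolding B_def by simp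
      show False using i le ale ble assms by (auto simp: Ee_def lookup_monexp)
    qed
  qed
  have c6: "\<forall>x\<in>polys_in {..<2}. \<exists>c. milnor_eq {..<2} ?F x (\<Sum>(a, b)\<in>B. const (c (a, b)) * mon a b)"
  proof
    fix x assume x: "x \<in> polys_in {..<2}"
    define c where "c ab = Poly_Mapping.lookup x (monexp (fst ab) (snd ab))" for ab
    let ?X = "\<Sum>(a, b)\<in>B. const (c (a, b)) * mon a b"
    let ?Y = "x - ?X"
    have kY: "Poly_Mapping.keys \<alpha> \<subseteq> {0,1}" if "\<alpha> \<in> Poly_Mapping.keys ?Y" for \<alpha>
    proof (cases "Poly_Mapping.lookup x \<alpha> = 0")
      case True
      then have "Poly_Mapping.lookup ?X \<alpha> \<noteq> 0" using that by (simp add: in_keys_iff lookup_minus)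
      then obtain y where "y \<in> B" "monexp (fst y) (snd y) = \<alpha>" using lookup_X_nz by blast
      then show ?thesis using keys_monexp by blast
    next
      case False
      then show ?thesis using x unfolding polys_in_def lessThan2 by (auto simp: in_keys_iff)
    qed
    have Ypoly: "?Y \<in> polys_in {0,1}" unfolding polys_in_def using kY by blast
    have bad: "\<forall>\<alpha>\<in>Poly_Mapping.keys ?Y. \<exists>i\<in>{0,1}. Ee p q i - 1 \<le> Poly_Mapping.lookup \<alpha> i"
    proof
      fix \<alpha> assume al: "\<alpha> \<in> Poly_Mapping.keys ?Y"
      show "\<exists>i\<in>{0,1}. Ee p q i - 1 \<le> Poly_Mapping.lookup \<alpha> i"
      proof (rule ccontr)
        assume nb: "\<not> (\<exists>i\<in>{0,1}. Ee p q i - 1 \<le> Poly_Mapping.lookup \<alpha> i)"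
        have a0: "Poly_Mapping.lookup \<alpha> 0 \<le> p - 2" using nb assms by (auto simp: Ee_def)
        have a1: "Poly_Mapping.lookup \<alpha> 1 \<le> q - 2" using nb assms by (auto simp: Ee_def)
        have ae: "\<alpha> = monexp (Poly_Mapping.lookup \<alpha> 0) (Poly_Mapping.lookup \<alpha> 1)"
          by (rule mono_eq_monexp[OF kY[OF al]])
        have inB: "(Poly_Mapping.lookup \<alpha> 0, Poly_Mapping.lookup \<alpha> 1) \<in> B" unfolding B_def using a0 a1 by simp
        have "Poly_Mapping.lookup ?X \<alpha> = c (Poly_Mapping.lookup \<alpha> 0, Poly_Mapping.lookup \<alpha> 1)"
          using lookup_X_monexp[OF finB, of c "Poly_Mapping.lookup \<alpha> 0" "Poly_Mapping.lookup \<alpha> 1"] inB ae by simp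
        also have "\<dots> = Poly_Mapping.lookup x \<alpha>" unfolding c_def using ae by simp
        finally have "Poly_Mapping.lookup ?Y \<alpha> = 0" by (simp add: lookup_minus)
        then show False using al by (simp add: in_keys_iff)
      qed
    qed
    have "?Y \<in> jacset p q {0,1}" by (rule jac_J2[OF p1 _ Ypoly bad]) simp
    then have "milnor_eq {..<2} ?F x ?X" unfolding milnor_eq_def lessThan2 J01 .
    then show "\<exists>c. milnor_eq {..<2} ?F x (\<Sum>(a, b)\<in>B. const (c (a, b)) * mon a b)" by blast
  qed
  have c8: "\<forall>i\<in>I. dual_bideg 2 (qwpq p q) ?nu ?j 0 i =
                 (- wdeg (qwpq p q) (monexp (p - rep2 p i) (q - rep2 q i)),
                  wdeg (qwpq p q) (monexp (p - rep2 p i) (q - rep2 q i)))"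
    unfolding I' using bideg_lemma[OF assms(1,2)] by blast
  show ?thesis unfolding Let_def I_def[symmetric] B_def[symmetric]
    using c1 c2 c3 c4 c5 c6 bij c8 by (intro conjI)
qed


end
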